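(* Let $D$ be a Dyck shape of length $2n$ and $1\leq i\leq n+1$. Then there is a unique way to add to $D$ a ribbon (i.e., a unique Dyck shape $E$ of length $2n+2$ with $D\subset E$ and $E/D$ a ribbon) such that the number of South-West–to–North-East diagonals met by the ribbon $E/D$ is $i$.
   Context: The staircase partition of size $n$ is $\delta_n=(n,n-1,\dots,1)$. A Dyck shape of length $2n$ is a skew shape $\delta_n/\lambda$ where $\lambda$ is a Young diagram with $\lambda\subset\delta_{n-1}$. It is drawn in "Japanese notation": the French-convention Young diagram rotated by 135 degrees clockwise, so that the upper border of a Dyck shape of length $2n$ traces a Dyck path of length $2n$ (steps $\nearrow=(1,1)$, $\searrow=(1,-1)$ from $(0,0)$ to $(2n,0)$ staying at nonnegative height), and the cells are unit squares standing on a corner. In this picture the cells lie along two families of diagonals: the South-East to North-West diagonals (whose cell counts are the parts of $\lambda$'s complement structure) and the South-West to North-East diagonals. A skew shape is a ribbon if it is connected and contains no $2\times 2$ square. For Dyck shapes $D$, $E$ of lengths $2n$ and $2n+2$, arranged so that their leftmost cells coincide, one writes $D\sqsubset E$ ("$E$ is obtained from $D$ by addition of a ribbon") if $D\subset E$ and $E/D$ is a ribbon. Equivalently, in terms of words over $\{\nearrow,\searrow\}$, $D\sqsubset E$ iff $E$ is obtained from $D\searrow\searrow$ by changing one $\searrow$ (any except the last one) into $\nearrow$, giving $n+1$ possibilities. *)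

theory Defs
  imports Main
begin

text \<open>Cells of Young diagrams in French convention are pairs (a,b) of naturals:
  a = row index (from the bottom), b = column index (from the left), both starting at 0.\<close>

definition staircase :: "nat \<Rightarrow> (nat \<times> nat) set" where
  "staircase n = {(a, b). a + b < n}"

definition young_diagram :: "(nat \<times> nat) set \<Rightarrow> bool" where
  "young_diagram lam \<longleftrightarrow> finite lam \<and>
     (\<forall>a b a' b'. (a, b) \<in> lam \<longrightarrow> a' \<le> a \<longrightarrow> b' \<le> b \<longrightarrow> (a', b') \<in> lam)"

text \<open>Japanese-notation coordinates for a cell of delta_n: a cell is recorded as (i,j)
  where i is the index (from the left) of its South-West to North-East diagonal and j the
  index (from the left) of its South-East to North-West diagonal. The leftmost cell of
  any Dyck shape is (0,0), so shapes of different lengths are arranged with coinciding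
  leftmost cells.\<close>

definition japanese :: "nat \<Rightarrow> nat \<times> nat \<Rightarrow> nat \<times> nat" where
  "japanese n = (\<lambda>(a, b). (a, n - 1 - b))"

definition dyck_shape :: "nat \<Rightarrow> (nat \<times> nat) set \<Rightarrow> bool" where
  "dyck_shape n D \<longleftrightarrow>
     (\<exists>lam. young_diagram lam \<and> lam \<subseteq> staircase (n - 1) \<and>
            D = japanese n ` (staircase n - lam))"

definition adjacent_cells :: "nat \<times> nat \<Rightarrow> nat \<times> nat \<Rightarrow> bool" where
  "adjacent_cells c d \<longleftrightarrow>
     (fst c = fst d \<and> (snd c = Suc (snd d) \<or> snd d = Suc (snd c))) \<or>
     (snd c = snd d \<and> (fst c = Suc (fst d) \<or> fst d = Suc (fst c)))"

definition connected_cells :: "(nat \<times> nat) set \<Rightarrow> bool" where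
  "connected_cells S \<longleftrightarrow> S \<noteq> {} \<and>
     (\<forall>x\<in>S. \<forall>y\<in>S. (\<lambda>u v. u \<in> S \<and> v \<in> S \<and> adjacent_cells u v)\<^sup>*\<^sup>* x y)"

definition ribbon :: "(nat \<times> nat) set \<Rightarrow> bool" where
  "ribbon S \<longleftrightarrow> connected_cells S \<and>
     \<not> (\<exists>i j. {(i, j), (Suc i, j), (i, Suc j), (Suc i, Suc j)} \<subseteq> S)"

definition sw_ne_diagonals :: "(nat \<times> nat) set \<Rightarrow> nat set" where
  "sw_ne_diagonals S = fst ` S"

end

theory Submission
  imports Defs
begin

definition goodt :: "nat \<Rightarrow> (nat \<Rightarrow> nat) \<Rightarrow> bool" where
  "goodt n t \<longleftrightarrow> mono t \<and> (\<forall>a<n. a < t a) \<and> (\<forall>a\<ge>n. t a = n)"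

definition shp :: "(nat \<Rightarrow> nat) \<Rightarrow> (nat \<times> nat) set" where
  "shp t = {(a, j). a \<le> j \<and> j < t a}"

lemma char1:
  assumes "dyck_shape n D"
  shows "\<exists>t. goodt n t \<and> D = shp t"
proof -
  obtain lam where yl: "young_diagram lam" and ls: "lam \<subseteq> staircase (n - 1)"
    and D: "D = japanese n ` (staircase n - lam)"
    using assms unfolding dyck_shape_def by blast
  have dc: "\<And>a b a' b'. (a, b) \<in> lam \<Longrightarrow> a' \<le> a \<Longrightarrow> b' \<le> b \<Longrightarrow> (a', b') \<in> lam"
    using yl unfolding young_diagram_def by blast
  have inl: "\<And>a b. (a, b) \<in> lam \<Longrightarrow> a + b < n - 1"
    using ls unfolding staircase_def by blast
  define l where "l a = (LEAST b. (a, b) \<notin> lam)" for a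
  have ex: "(a, n) \<notin> lam" for a using inl by fastforce
  have lnot: "(a, l a) \<notin> lam" for a
    unfolding l_def by (rule LeastI[of _ n], rule ex)
  have mem: "(a, b) \<in> lam \<longleftrightarrow> b < l a" for a b
  proof
    assume "(a, b) \<in> lam"
    then show "b < l a" using dc[of a b a "l a"] lnot[of a] by (cases "l a \<le> b") auto
  next
    assume "b < l a"
    then show "(a, b) \<in> lam" unfolding l_def using not_less_Least by blast
  qed
  have lb: "a + l a < n" if "l a > 0" for a
  proof -
    have "(a, l a - 1) \<in> lam" using mem that by simp
    then show ?thesis using inl[of a "l a - 1"] that by simp
  qed
  have lmono: "l a' \<le> l a" if "a \<le> a'" for a a'
  proof (rule ccontr)
    assume "\<not> l a' \<le> l a"
    then have "(a', l a) \<in> lam" using mem by simp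
    then have "(a, l a) \<in> lam" using dc that by blast
    then show False using lnot by blast
  qed
  define t where "t a = n - l a" for a
  have g: "goodt n t"
    unfolding goodt_def
  proof (intro conjI allI impI)
    show "mono t" unfolding mono_def t_def using lmono by (simp add: diff_le_mono2)
  next
    fix a assume "a < n" then show "a < t a" unfolding t_def using lb[of a] by (cases "l a = 0") auto
  next
    fix a assume "n \<le> a" then show "t a = n" unfolding t_def using lb[of a] by (cases "l a = 0") auto
  qed
  have "D = shp t"
  proof
    show "D \<subseteq> shp t"
    proof
      fix x assume "x \<in> D"
      then obtain a b where x: "x = japanese n (a, b)" and ab: "a + b < n" "\<not> b < l a"
        using D mem unfolding staircase_def by auto
      then show "x \<in> shp t" unfolding japanese_def shp_def t_def by auto
    qed
  next
    show "shp t \<subseteq> D"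
    proof
      fix x assume "x \<in> shp t"
      then obtain a j where x: "x = (a, j)" and aj: "a \<le> j" "j < n - l a"
        unfolding shp_def t_def by auto
      have "(a, n - 1 - j) \<in> staircase n - lam" using aj mem unfolding staircase_def by auto
      moreover have "x = japanese n (a, n - 1 - j)" using x aj unfolding japanese_def by auto
      ultimately show "x \<in> D" using D by blast
    qed
  qed
  then show ?thesis using g by blast
qed

lemma char2:
  assumes "goodt n t"
  shows "dyck_shape n (shp t)"
proof -
  have m: "\<And>a b. a \<le> b \<Longrightarrow> t a \<le> t b" and lt: "\<And>a. a < n \<Longrightarrow> a < t a"
    and ge: "\<And>a. n \<le> a \<Longrightarrow> t a = n"
    using assms unfolding goodt_def mono_def by auto
  define lam where "lam = {(a, b). b < n - t a}"
  have sub: "lam \<subseteq> {..<n} \<times> {..<n}"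
  proof
    fix x assume "x \<in> lam"
    then obtain a b where x: "x = (a, b)" "b < n - t a" unfolding lam_def by auto
    then have "a < n" using ge[of a] by (cases "n \<le> a") auto
    then show "x \<in> {..<n} \<times> {..<n}" using x by auto
  qed
  have y: "young_diagram lam"
    unfolding young_diagram_def
  proof (intro conjI allI impI)
    show "finite lam" using sub finite_subset by blast
  next
    fix a b a' b' assume "(a, b) \<in> lam" "a' \<le> a" "b' \<le> b"
    then show "(a', b') \<in> lam" unfolding lam_def using m[of a' a] by auto
  qed
  have ls: "lam \<subseteq> staircase (n - 1)"
  proof
    fix x assume "x \<in> lam"
    then obtain a b where x: "x = (a, b)" "b < n - t a" unfolding lam_def by auto
    then have "a < n" using ge[of a] by (cases "n \<le> a") auto
    then show "x \<in> staircase (n - 1)" using x lt[of a] unfolding staircase_def by auto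
  qed
  have "shp t = japanese n ` (staircase n - lam)"
  proof
    show "japanese n ` (staircase n - lam) \<subseteq> shp t"
    proof
      fix x assume "x \<in> japanese n ` (staircase n - lam)"
      then obtain a b where x: "x = japanese n (a, b)" and ab: "a + b < n" "\<not> b < n - t a"
        unfolding staircase_def lam_def by auto
      then show "x \<in> shp t" unfolding japanese_def shp_def by auto
    qed
  next
    show "shp t \<subseteq> japanese n ` (staircase n - lam)"
    proof
      fix x assume "x \<in> shp t"
      then obtain a j where x: "x = (a, j)" and aj: "a \<le> j" "j < t a"
        unfolding shp_def by auto
      have "t a \<le> n" using m[of a "a + n"] ge[of "a + n"] by simp
      then have "(a, n - 1 - j) \<in> staircase n - lam" using aj unfolding staircase_def lam_def by auto
      moreover have "x = japanese n (a, n - 1 - j)" using x aj \<open>t a \<le> n\<close> unfolding japanese_def by auto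
      ultimately show "x \<in> japanese n ` (staircase n - lam)" by blast
    qed
  qed
  then show ?thesis unfolding dyck_shape_def using y ls by blast
qed

lemma row_path:
  assumes "j0 \<le> j1" "\<forall>j. j0 \<le> j \<and> j \<le> j1 \<longrightarrow> (a, j) \<in> S"
  shows "(\<lambda>u v. u \<in> S \<and> v \<in> S \<and> adjacent_cells u v)\<^sup>*\<^sup>* (a, j0) (a, j1)"
  using assms
proof (induction j1 rule: dec_induct)
  case base then show ?case by simp
next
  case (step m)
  then have "(\<lambda>u v. u \<in> S \<and> v \<in> S \<and> adjacent_cells u v)\<^sup>*\<^sup>* (a, j0) (a, m)" by simp
  moreover have "(a, m) \<in> S" "(a, Suc m) \<in> S" using step by auto
  moreover have "adjacent_cells (a, m) (a, Suc m)" by (simp add: adjacent_cells_def)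
  ultimately show ?case by (metis (mono_tags, lifting) rtranclp.rtrancl_into_rtrancl)
qed

lemma sym_path:
  assumes "(\<lambda>u v. u \<in> S \<and> v \<in> S \<and> adjacent_cells u v)\<^sup>*\<^sup>* x y"
  shows "(\<lambda>u v. u \<in> S \<and> v \<in> S \<and> adjacent_cells u v)\<^sup>*\<^sup>* y x"
  using assms
proof (induction rule: rtranclp_induct)
  case base then show ?case by simp
next
  case (step y z)
  then show ?case by (intro converse_rtranclp_into_rtranclp[of _ z y]) (auto simp: adjacent_cells_def)
qed

lemma goodt_facts:
  assumes "goodt n t"
  shows "\<And>a b. a \<le> b \<Longrightarrow> t a \<le> t b" "\<And>a. a < n \<Longrightarrow> a < t a"
    "\<And>a. n \<le> a \<Longrightarrow> t a = n" "\<And>a. t a \<le> n" "\<And>a. a \<le> n \<Longrightarrow> a \<le> t a"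
proof -
  show m: "\<And>a b. a \<le> b \<Longrightarrow> t a \<le> t b" and lt: "\<And>a. a < n \<Longrightarrow> a < t a"
    and ge: "\<And>a. n \<le> a \<Longrightarrow> t a = n"
    using assms unfolding goodt_def mono_def by auto
  show tn: "\<And>a. t a \<le> n"
  proof -
    fix a have "t a \<le> t (a + n)" using m by simp
    then show "t a \<le> n" using ge[of "a + n"] by simp
  qed
  show "\<And>a. a \<le> n \<Longrightarrow> a \<le> t a"
  proof -
    fix a assume "a \<le> n"
    then show "a \<le> t a" using lt[of a] ge[of a] by (cases "a < n") auto
  qed
qed

lemma existence:
  assumes g: "goodt n t" and kn: "k \<le> n"
  defines "s \<equiv> \<lambda>a. if a < k then t a else Suc (t (Suc a))"
  shows "goodt (n + 1) s \<and> shp t \<subseteq> shp s \<and> ribbon (shp s - shp t)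
     \<and> card (fst ` (shp s - shp t)) = n + 1 - k"
proof -
  note f = goodt_facts[OF g]
  have gs: "goodt (n + 1) s"
    unfolding goodt_def
  proof (intro conjI allI impI)
    show "mono s" unfolding mono_def s_def
    proof (intro allI impI)
      fix x y :: nat assume "x \<le> y"
      then show "(if x < k then t x else Suc (t (Suc x))) \<le> (if y < k then t y else Suc (t (Suc y)))"
        using f(1)[of x y] f(1)[of x "Suc y"] f(1)[of "Suc x" "Suc y"] by auto
    qed
  next
    fix a assume "a < n + 1" then show "a < s a" unfolding s_def
      using f(2)[of a] f(1)[of a "Suc a"] f(3)[of "Suc a"] kn by (cases "a < n") auto
  next
    fix a assume "n + 1 \<le> a" then show "s a = n + 1" unfolding s_def using f(3)[of "Suc a"] kn by auto
  qed
  have sub: "shp t \<subseteq> shp s"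
  proof
    fix x assume "x \<in> shp t"
    then obtain a j where x: "x = (a, j)" "a \<le> j" "j < t a" unfolding shp_def by auto
    have "t a \<le> t (Suc a)" using f(1) by simp
    then have "j < s a" using x unfolding s_def by auto
    then show "x \<in> shp s" using x unfolding shp_def by auto
  qed
  define R where "R = {(a, j). k \<le> a \<and> a \<le> n \<and> t a \<le> j \<and> j \<le> t (Suc a)}"
  have RE: "shp s - shp t = R"
  proof
    show "shp s - shp t \<subseteq> R"
    proof
      fix x assume "x \<in> shp s - shp t"
      then obtain a j where x: "x = (a, j)" "a \<le> j" "j < s a" "\<not> j < t a" unfolding shp_def by auto
      then have "\<not> a < k" unfolding s_def by auto
      then have "j \<le> t (Suc a)" using x unfolding s_def by auto
      moreover have "a \<le> n" using x f(3)[of a] f(3)[of "Suc a"] \<open>j \<le> t (Suc a)\<close> by (cases "n \<le> a") auto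
      ultimately show "x \<in> R" using x \<open>\<not> a < k\<close> unfolding R_def by auto
    qed
  next
    show "R \<subseteq> shp s - shp t"
    proof
      fix x assume "x \<in> R"
      then obtain a j where x: "x = (a, j)" "k \<le> a" "a \<le> n" "t a \<le> j" "j \<le> t (Suc a)"
        unfolding R_def by auto
      have "a \<le> t a" using f(5) x by simp
      then have "a \<le> j" "j < s a" "\<not> j < t a" using x unfolding s_def by auto
      then show "x \<in> shp s - shp t" using x unfolding shp_def by auto
    qed
  qed
  let ?r = "\<lambda>u v. u \<in> R \<and> v \<in> R \<and> adjacent_cells u v"
  have nn: "(n, n) \<in> R" unfolding R_def using f(3)[of n] f(3)[of "Suc n"] kn by auto
  have toN: "\<forall>j. (a, j) \<in> R \<longrightarrow> ?r\<^sup>*\<^sup>* (a, j) (n, n)" if "k \<le> a" "a \<le> n" for a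
    using that(2)
  proof (induction a rule: inc_induct)
    case base
    show ?case
    proof (intro allI impI)
      fix j assume "(n, j) \<in> R"
      then have "j = n" unfolding R_def using f(3)[of n] f(3)[of "Suc n"] by auto
      then show "?r\<^sup>*\<^sup>* (n, j) (n, n)" by simp
    qed
  next
    case (step m)
    show ?case
    proof (intro allI impI)
      fix j assume jm: "(m, j) \<in> R"
      then have "k \<le> m" unfolding R_def by auto
      have p1: "?r\<^sup>*\<^sup>* (m, j) (m, t (Suc m))"
        by (rule row_path) (use jm in \<open>auto simp: R_def\<close>)
      have c1: "(m, t (Suc m)) \<in> R" using jm unfolding R_def by auto
      have c2: "(Suc m, t (Suc m)) \<in> R" unfolding R_def using \<open>k \<le> m\<close> step(2) f(1)[of "Suc m" "Suc (Suc m)"] by auto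
      have "?r (m, t (Suc m)) (Suc m, t (Suc m))" using c1 c2 by (simp add: adjacent_cells_def)
      moreover have "?r\<^sup>*\<^sup>* (Suc m, t (Suc m)) (n, n)" using step(3) c2 by blast
      ultimately have "?r\<^sup>*\<^sup>* (m, t (Suc m)) (n, n)" by (rule converse_rtranclp_into_rtranclp)
      then show "?r\<^sup>*\<^sup>* (m, j) (n, n)" using p1 by simp
    qed
  qed
  have conn: "connected_cells R"
    unfolding connected_cells_def
  proof (intro conjI ballI)
    show "R \<noteq> {}" using nn by blast
  next
    fix x y assume "x \<in> R" "y \<in> R"
    have R2: "?r\<^sup>*\<^sup>* z (n, n)" if "z \<in> R" for z
    proof -
      obtain a j where z: "z = (a, j)" "k \<le> a" "a \<le> n" using \<open>z \<in> R\<close> unfolding R_def by auto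
      show ?thesis using toN[OF z(2,3)] that z(1) by blast
    qed
    have "?r\<^sup>*\<^sup>* (n, n) y" using sym_path[OF R2[OF \<open>y \<in> R\<close>]] .
    then show "?r\<^sup>*\<^sup>* x y" using R2[OF \<open>x \<in> R\<close>] by (rule rtranclp_trans[rotated])
  qed
  have no2: "\<not> (\<exists>i j. {(i, j), (Suc i, j), (i, Suc j), (Suc i, Suc j)} \<subseteq> R)"
  proof
    assume "\<exists>i j. {(i, j), (Suc i, j), (i, Suc j), (Suc i, Suc j)} \<subseteq> R"
    then obtain i j where "(Suc i, j) \<in> R" "(i, Suc j) \<in> R" by blast
    then have "t (Suc i) \<le> j" "Suc j \<le> t (Suc i)" unfolding R_def by auto
    then show False by simp
  qed
  have fR: "fst ` R = {k..n}"
  proof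
    show "fst ` R \<subseteq> {k..n}" unfolding R_def by auto
  next
    show "{k..n} \<subseteq> fst ` R"
    proof
      fix a assume "a \<in> {k..n}"
      then have "(a, t a) \<in> R" unfolding R_def using f(1)[of a "Suc a"] by auto
      then show "a \<in> fst ` R" by force
    qed
  qed
  show ?thesis using gs sub conn no2 fR RE unfolding ribbon_def by auto
qed

lemma uniqueness:
  assumes g: "goodt n t" and g': "goodt (n + 1) s'" and sub: "shp t \<subseteq> shp s'"
    and rib: "ribbon (shp s' - shp t)" and ci: "card (fst ` (shp s' - shp t)) = i"
    and i1: "1 \<le> i" and i2: "i \<le> n + 1"
  shows "s' = (\<lambda>a. if a < n + 1 - i then t a else Suc (t (Suc a)))"
proof -
  note f = goodt_facts[OF g]
  note f' = goodt_facts[OF g']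
  define R where "R = shp s' - shp t"
  have Req: "R = {(a, j). a \<le> j \<and> t a \<le> j \<and> j < s' a}" unfolding R_def shp_def by auto
  have tle: "t a \<le> s' a" for a
  proof (cases "a < n")
    case True
    then have "(a, t a - 1) \<in> shp t" using f(2)[of a] unfolding shp_def by auto
    then have "(a, t a - 1) \<in> shp s'" using sub by blast
    then show ?thesis unfolding shp_def by auto
  next
    case False
    then show ?thesis using f(4)[of a] f'(5)[of a] f'(3)[of a] by (cases "a \<le> n + 1") auto
  qed
  define NE where "NE = fst ` R"
  have NEc: "a \<in> NE \<longleftrightarrow> a \<le> n \<and> t a < s' a" for a
  proof
    assume "a \<in> NE"
    then obtain j where j: "(a, j) \<in> R" unfolding NE_def by force
    then have aj: "a \<le> j" "t a \<le> j" "j < s' a" unfolding Req by auto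
    have "a \<le> n"
    proof (rule ccontr)
      assume "\<not> a \<le> n" then have "s' a = n + 1" using f'(3) by simp
      then show False using aj \<open>\<not> a \<le> n\<close> by simp
    qed
    then show "a \<le> n \<and> t a < s' a" using aj by simp
  next
    assume a: "a \<le> n \<and> t a < s' a"
    then have "(a, t a) \<in> R" unfolding Req using f(5)[of a] by auto
    then show "a \<in> NE" unfolding NE_def by force
  qed
  let ?r = "\<lambda>u v. u \<in> R \<and> v \<in> R \<and> adjacent_cells u v"
  have nn: "(n, n) \<in> R" unfolding Req using f(3)[of n] f'(2)[of n] by auto
  have conn: "?r\<^sup>*\<^sup>* x (n, n)" if "x \<in> R" for x
  proof -
    have "connected_cells R" using rib unfolding ribbon_def R_def by simp
    then have "\<forall>x\<in>R. \<forall>y\<in>R. ?r\<^sup>*\<^sup>* x y" unfolding connected_cells_def by blast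
    then show ?thesis using that nn by blast
  qed
  have contig: "Suc a \<in> NE" if H0: "a < n" "a \<in> NE" for a
  proof (rule ccontr)
    assume nS: "Suc a \<notin> NE"
    obtain j where j: "(a, j) \<in> R" using H0(2) unfolding NE_def by force
    have "fst y \<le> a" if "?r\<^sup>*\<^sup>* (a, j) y" for y
      using that
    proof (induction rule: rtranclp_induct)
      case base then show ?case by simp
    next
      case (step y z)
      then have "z \<in> R" "adjacent_cells y z" by auto
      then have "fst z \<le> Suc (fst y)" "fst z \<in> NE" unfolding adjacent_cells_def NE_def by auto
      then show ?case using step(3) nS by (cases "fst z = Suc a") auto
    qed
    then have "n \<le> a" using conn[OF j] by fastforce
    then show False using H0 by simp
  qed
  have overlap: "s' a = Suc (t (Suc a))" if H1: "a < n" "a \<in> NE" "Suc a \<in> NE" for a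
  proof -
    obtain j where j: "(a, j) \<in> R" using H1(2) unfolding NE_def by force
    have ge: "Suc (t (Suc a)) \<le> s' a"
    proof (rule ccontr)
      assume H: "\<not> Suc (t (Suc a)) \<le> s' a"
      have "fst y \<le> a" if "?r\<^sup>*\<^sup>* (a, j) y" for y
        using that
      proof (induction rule: rtranclp_induct)
        case base then show ?case by simp
      next
        case (step y z)
        then have yz: "y \<in> R" "z \<in> R" "adjacent_cells y z" by auto
        show ?case
        proof (rule ccontr)
          assume "\<not> fst z \<le> a"
          then have "fst y = a" "fst z = Suc a" "snd z = snd y"
            using yz(3) step(3) unfolding adjacent_cells_def by auto
          moreover have "snd y < s' (fst y)" "t (fst z) \<le> snd z" using yz unfolding Req by auto
          ultimately show False using H by auto
        qed
      qed
      then have "n \<le> a" using conn[OF j] by fastforce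
      then show False using H1 by simp
    qed
    have le: "s' a \<le> Suc (t (Suc a))"
    proof (rule ccontr)
      assume H: "\<not> s' a \<le> Suc (t (Suc a))"
      define jj where "jj = t (Suc a)"
      have a1: "Suc a \<le> jj" using f(5)[of "Suc a"] that(1) using H1(1) unfolding jj_def by simp
      have ta: "t a \<le> jj" using f(1)[of a "Suc a"] unfolding jj_def by simp
      have sm: "s' a \<le> s' (Suc a)" using f'(1) by simp
      have "{(a, jj), (Suc a, jj), (a, Suc jj), (Suc a, Suc jj)} \<subseteq> R"
      proof -
        have "jj < s' a" "Suc jj < s' a" using H unfolding jj_def by auto
        then have "(a, jj) \<in> R" "(Suc a, jj) \<in> R" "(a, Suc jj) \<in> R" "(Suc a, Suc jj) \<in> R"
          unfolding Req using a1 ta sm unfolding jj_def by auto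
        then show ?thesis by simp
      qed
      then show False using rib unfolding ribbon_def R_def by blast
    qed
    show ?thesis using ge le by simp
  qed
  define k' where "k' = (LEAST a. a \<in> NE)"
  have nNE: "n \<in> NE" using nn unfolding NE_def by force
  have k'NE: "k' \<in> NE" unfolding k'_def using nNE by (rule LeastI)
  have NEeq: "NE = {k'..n}"
  proof
    show "NE \<subseteq> {k'..n}"
    proof
      fix a assume a: "a \<in> NE"
      then have "k' \<le> a" unfolding k'_def by (rule Least_le)
      moreover have "a \<le> n" using a NEc by blast
      ultimately show "a \<in> {k'..n}" by simp
    qed
  next
    show "{k'..n} \<subseteq> NE"
    proof
      fix a assume "a \<in> {k'..n}"
      then have "k' \<le> a" "a \<le> n" by auto
      then show "a \<in> NE"
      proof (induction a rule: dec_induct)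
        case base then show ?case using k'NE by simp
      next
        case (step m) then show ?case using contig by simp
      qed
    qed
  qed
  have "card NE = i" using ci unfolding NE_def R_def .
  then have kk: "k' = n + 1 - i" using NEeq i1 i2 by simp
  show ?thesis
  proof
    fix a
    show "s' a = (if a < n + 1 - i then t a else Suc (t (Suc a)))"
    proof (cases "a < k'")
      case True
      then have "a \<notin> NE" using NEeq by auto
      then have "s' a = t a" using NEc[of a] tle[of a] True kk by auto
      then show ?thesis using True kk by simp
    next
      case False
      show ?thesis
      proof (cases "a < n")
        case True
        then have "a \<in> NE" "Suc a \<in> NE" using NEeq False by auto
        then show ?thesis using overlap True False kk by simp
      next
        case F2: False
        have "s' a = n + 1" using f'(3)[of a] f'(2)[of n] f'(4)[of n] F2
          by (cases "a = n") auto
        moreover have "t (Suc a) = n" using f(3) F2 by simp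
        ultimately show ?thesis using F2 False kk by simp
      qed
    qed
  qed
qed

theorem mainTheorem2:
  fixes n i :: nat and D :: "(nat \<times> nat) set"
  assumes "dyck_shape n D" and "1 \<le> i" and "i \<le> n + 1"
  shows "\<exists>!E. dyck_shape (n + 1) E \<and> D \<subseteq> E \<and> ribbon (E - D)
              \<and> card (sw_ne_diagonals (E - D)) = i"
proof -
  obtain t where g: "goodt n t" and D: "D = shp t" using char1[OF assms(1)] by blast
  define s where "s = (\<lambda>a. if a < n + 1 - i then t a else Suc (t (Suc a)))"
  have kn: "n + 1 - i \<le> n" using assms by simp
  have ex: "goodt (n + 1) s \<and> shp t \<subseteq> shp s \<and> ribbon (shp s - shp t)
     \<and> card (fst ` (shp s - shp t)) = n + 1 - (n + 1 - i)"
    using existence[OF g kn] unfolding s_def by blast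
  show ?thesis
  proof (rule ex1I[of _ "shp s"])
    show "dyck_shape (n + 1) (shp s) \<and> D \<subseteq> shp s \<and> ribbon (shp s - D)
              \<and> card (sw_ne_diagonals (shp s - D)) = i"
      using ex char2[of "n + 1" s] assms unfolding D sw_ne_diagonals_def by auto
  next
    fix E assume E: "dyck_shape (n + 1) E \<and> D \<subseteq> E \<and> ribbon (E - D)
              \<and> card (sw_ne_diagonals (E - D)) = i"
    obtain s' where g': "goodt (n + 1) s'" and Es: "E = shp s'" using char1[of "n + 1" E] E by blast
    have "s' = s" unfolding s_def
      by (rule uniqueness[OF g g']) (use E assms in \<open>auto simp: D Es sw_ne_diagonals_def\<close>)
    then show "E = shp s" using Es by simp
  qed
qed

end
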